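(* Let $A \in \mathbb{R}^{n \times n}$, let $\lambda \in \mathbb{R}$ be a simple eigenvalue of $A$, and let $x \in \mathbb{R}^n$ be an eigenvector, $Ax = \lambda x$, with $x_i \neq 0$ for all $1 \le i \le n$. Let $\varepsilon \in \{-1,1\}^n$ be defined by $x_i = \varepsilon_i |x_i|$. Let $D$ be the diagonal matrix with $D_{ii} = |x_i|$, let $B = D^{-1} A D$ (so $B_{ij} = a_{ij}|x_j|/|x_i|$), and let $C = B - \lambda \,\mathrm{Id}_{n\times n}$, with rows $c_1,\dots,c_n$; thus $C\varepsilon = 0$. Consider the following randomized iteration (Algorithm 1): start with $0 \neq y_0 \in \mathbb{R}^n$; given $y_k$, choose an index $i \in \{1,\dots,n\}$ at random, independently of the past, with $\mathbb{P}(i=j) = \|c_j\|^2 / \sum_{\ell=1}^n \|c_\ell\|^2$, and set $$y_{k+1} = y_k - \left\langle y_k, \frac{c_i}{\|c_i\|}\right\rangle \frac{c_i}{\|c_i\|}.$$ Let $S = S_k = \{1 \le i \le n : \mathrm{sign}((y_k)_i) \neq \varepsilon_i\}$. Denote by $\sigma_1(C) \ge \dots \ge \sigma_n(C)$ the singular values of $C$ and by $\|C\|_F$ its Frobenius norm. If $\sigma_{n-1}(C) > 0$, then for all $k \in \mathbb{N}$, $$\mathbb{E}\left[\min\{\#S, n - \#S\}\cdot \|y_k\|^2\right] \le n \left(1 - \frac{\sigma_{n-1}(C)^2}{\|C\|_F^2}\right)^k \|y_0\|^2.$$ Moreover, if $y_0$ is chosen uniformly at random from a sphere of radius $\|y_0\|$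 centered at the origin (independently of the index choices), then for all $k \in \mathbb{N}$, $\mathbb{E}\,\|y_k\|^2 \ge \|y_0\|^2/n$.
   Context: $\mathrm{sign}(t)$ denotes the sign of a real number $t$ (with $\mathrm{sign}(0)=0$). Throughout, the solution of $Cy=0$ is assumed unique up to scaling, i.e. the null space of $C$ is spanned by $\varepsilon$; the sign vector $\varepsilon$ is fixed as one of the two admissible choices $\pm\varepsilon$. Rows $c_j$ with $c_j = 0$ are chosen with probability zero. *)

theory Defs
  imports "HOL-Analysis.Analysis" "HOL-Probability.Probability"
    "HOL-Computational_Algebra.Polynomial"
begin

definition charpoly :: "real^'n^'n \<Rightarrow> real poly" where
  "charpoly M = det (\<chi> i j. (if i = j then [:0, 1:] else 0) - [:M $ i $ j:])"

definition simple_eigenvalue :: "real^'n^'n \<Rightarrow> real \<Rightarrow> bool" where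
  "simple_eigenvalue M l \<longleftrightarrow> order l (charpoly M) = 1"

text \<open>Singular values sigma_1 \<ge> ... \<ge> sigma_n: square roots of the eigenvalues
  of C^T C (with multiplicity), sorted decreasingly; indexed 1..n.\<close>
definition singular_value :: "real^'n^'n \<Rightarrow> nat \<Rightarrow> real" where
  "singular_value C k =
     rev (map sqrt (sorted_list_of_multiset (proots (charpoly (transpose C ** C))))) ! (k - 1)"

definition frobenius_norm :: "real^'n^'n \<Rightarrow> real" where
  "frobenius_norm C = sqrt (\<Sum>i\<in>UNIV. \<Sum>j\<in>UNIV. (C $ i $ j)\<^sup>2)"

definition diag_mat :: "real^'n \<Rightarrow> real^'n^'n" where
  "diag_mat d = (\<chi> i j. if i = j then d $ i else 0)"

definition Cmat :: "real^'n^'n \<Rightarrow> real \<Rightarrow> real^'n \<Rightarrow> real^'n^'n" where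
  "Cmat A l x = matrix_inv (diag_mat (\<chi> i. \<bar>x $ i\<bar>)) ** A ** diag_mat (\<chi> i. \<bar>x $ i\<bar>)
                 - l *\<^sub>R mat 1"

definition index_pmf :: "real^'n^'n \<Rightarrow> 'n pmf" where
  "index_pmf C = embed_pmf (\<lambda>j. (norm (C $ j))\<^sup>2 / (\<Sum>l\<in>UNIV. (norm (C $ l))\<^sup>2))"

definition kstep :: "real^'n^'n \<Rightarrow> real^'n \<Rightarrow> 'n \<Rightarrow> real^'n" where
  "kstep C y i = y - (y \<bullet> (C $ i /\<^sub>R norm (C $ i))) *\<^sub>R (C $ i /\<^sub>R norm (C $ i))"

primrec iterate_pmf :: "real^'n^'n \<Rightarrow> real^'n \<Rightarrow> nat \<Rightarrow> (real^'n) pmf" where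
  "iterate_pmf C y0 0 = return_pmf y0"
| "iterate_pmf C y0 (Suc k) = bind_pmf (iterate_pmf C y0 k) (\<lambda>y. map_pmf (kstep C y) (index_pmf C))"

definition wrong_signs :: "real^'n \<Rightarrow> real^'n \<Rightarrow> 'n set" where
  "wrong_signs eps y = {i. sgn (y $ i) \<noteq> eps $ i}"

text \<open>Uniform (normalized surface) probability measure on the sphere of radius r about 0,
  realized as the radial projection of the normalized Lebesgue measure on the unit ball.\<close>
definition uniform_sphere :: "real \<Rightarrow> (real^'n) measure" where
  "uniform_sphere r = distr (uniform_measure lborel (ball 0 1)) borel (\<lambda>z. (r / norm z) *\<^sub>R z)"

end

theory Submission
  imports Defs
begin


lemma sym_dot:
  fixes M :: "real^'n^'n"
  assumes "transpose M = M"
  shows "(M *v u) \<bullet> w = u \<bullet> (M *v w)"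
proof -
  have "M *v u = u v* M" by (metis assms transpose_matrix_vector)
  then show ?thesis by (simp add: dot_lmul_matrix)
qed

lemma quad_zero:
  fixes a b :: real
  assumes "\<And>t. 0 \<le> 2 * t * a + t^2 * b"
  shows "a = 0"
proof (rule ccontr)
  assume a: "a \<noteq> 0"
  define c where "c = \<bar>b\<bar>"
  define B where "B = c + 2"
  define t where "t = - a / B"
  have c0: "c \<ge> 0" by (simp add: c_def)
  have pos: "B > 0" using c0 by (simp add: B_def)
  have "2 * t * a + t^2 * b \<le> 2 * t * a + t^2 * c"
    by (simp add: mult_left_mono c_def)
  also have "\<dots> = a^2 * (c - 2 * B) / B^2"
    using pos by (simp add: t_def field_simps power2_eq_square)
  also have "\<dots> < 0"
    using a pos c0 by (intro divide_neg_pos mult_pos_neg) (auto simp: B_def)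
  finally show False using assms[of t] by simp
qed

lemma rayleigh_eigen:
  fixes M :: "real^'n^'n"
  assumes symM: "transpose M = M" and W: "subspace W"
    and inv: "\<And>w. w \<in> W \<Longrightarrow> M *v w \<in> W"
    and ne: "w0 \<in> W" "w0 \<noteq> 0"
  shows "\<exists>v\<in>W. norm v = 1 \<and> M *v v = (v \<bullet> (M *v v)) *\<^sub>R v"
proof -
  define S where "S = W \<inter> sphere 0 1"
  have "closed W" using W by (simp add: closed_subspace)
  then have cS: "compact S" unfolding S_def by (simp add: compact_Int_closed closed_Int_compact)
  have "w0 /\<^sub>R norm w0 \<in> S" using ne W by (auto simp: S_def subspace_scale)
  then have neS: "S \<noteq> {}" by auto
  have "continuous_on S (\<lambda>u. u \<bullet> (M *v u))"
    by (intro continuous_intros)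
  from continuous_attains_inf[OF cS neS this] obtain v where vS: "v \<in> S"
    and vmin: "\<And>y. y \<in> S \<Longrightarrow> v \<bullet> (M *v v) \<le> y \<bullet> (M *v y)" by blast
  define m where "m = v \<bullet> (M *v v)"
  have vW: "v \<in> W" and nv: "norm v = 1" using vS by (auto simp: S_def)
  have gen: "m * (norm u)^2 \<le> u \<bullet> (M *v u)" if "u \<in> W" for u
  proof (cases "u = 0")
    case True then show ?thesis by simp
  next
    case False
    let ?u = "u /\<^sub>R norm u"
    have "?u \<in> S" using that False W by (auto simp: S_def subspace_scale)
    then have "m \<le> ?u \<bullet> (M *v ?u)" using vmin m_def by blast
    also have "\<dots> = (u \<bullet> (M *v u)) / (norm u)^2"
      by (simp add: matrix_vector_mult_scaleR power2_eq_square divide_inverse)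
    finally show ?thesis using False by (simp add: field_simps)
  qed
  have key: "w \<bullet> (M *v v) - m * (w \<bullet> v) = 0" if wW: "w \<in> W" for w
  proof (rule quad_zero)
    fix t :: real
    have "v + t *\<^sub>R w \<in> W" using vW wW W by (simp add: subspace_add subspace_scale)
    from gen[OF this]
    have "m * (norm (v + t *\<^sub>R w))^2 \<le> (v + t *\<^sub>R w) \<bullet> (M *v (v + t *\<^sub>R w))" .
    moreover have "(norm (v + t *\<^sub>R w))^2 = 1 + 2 * t * (w \<bullet> v) + t^2 * (w \<bullet> w)"
    proof -
      have vv: "v \<bullet> v = 1" using nv by (simp add: norm_eq_1)
      show ?thesis unfolding power2_norm_eq_inner
        using vv by (simp add: inner_add_left inner_add_right inner_commute power2_eq_square algebra_simps)
    qed
    moreover have "(v + t *\<^sub>R w) \<bullet> (M *v (v + t *\<^sub>R w)) = m + 2 * t * (w \<bullet> (M *v v)) + t^2 * (w \<bullet> (M *v w))"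
    proof -
      have "v \<bullet> (M *v w) = w \<bullet> (M *v v)"
        using sym_dot[OF symM, of w v] by (simp add: inner_commute)
      then show ?thesis
        by (simp add: m_def matrix_vector_right_distrib matrix_vector_mult_scaleR inner_add_left inner_add_right power2_eq_square algebra_simps)
    qed
    ultimately show "0 \<le> 2 * t * (w \<bullet> (M *v v) - m * (w \<bullet> v)) + t^2 * (w \<bullet> (M *v w) - m * (w \<bullet> w))"
      by (simp add: algebra_simps)
  qed
  define d where "d = M *v v - m *\<^sub>R v"
  have "d \<in> W" using vW inv W by (simp add: d_def subspace_diff subspace_scale)
  from key[OF this] have "d \<bullet> d = 0" by (simp add: d_def inner_diff_right inner_diff_left algebra_simps)
  then have "d = 0" by simp
  then show ?thesis using vW nv by (auto simp: d_def m_def)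
qed

lemma spectral_aux:
  fixes M :: "real^'n^'n"
  assumes symM: "transpose M = M"
  shows "k \<le> CARD('n) \<Longrightarrow> \<exists>B. finite B \<and> card B = k \<and> pairwise orthogonal B \<and>
           (\<forall>b\<in>B. norm b = 1 \<and> M *v b = (b \<bullet> (M *v b)) *\<^sub>R b)"
proof (induction k)
  case 0
  show ?case by (intro exI[of _ "{}"]) auto
next
  case (Suc k)
  then obtain B where fB: "finite B" and cB: "card B = k" and oB: "pairwise orthogonal B"
    and eB: "\<forall>b\<in>B. norm b = 1 \<and> M *v b = (b \<bullet> (M *v b)) *\<^sub>R b" by auto
  define W where "W = {w. \<forall>b\<in>B. b \<bullet> w = 0}"
  have sW: "subspace W" unfolding W_def subspace_def
    by (auto simp: inner_add_right)
  have iW: "M *v w \<in> W" if "w \<in> W" for w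
  proof -
    have "b \<bullet> (M *v w) = 0" if "b \<in> B" for b
    proof -
      have "b \<bullet> (M *v w) = (M *v b) \<bullet> w" using sym_dot[OF symM, of b w] by simp
      also have "\<dots> = (b \<bullet> (M *v b)) * (b \<bullet> w)" using eB that by (metis inner_scaleR_left)
      also have "\<dots> = 0" using \<open>w \<in> W\<close> that by (simp add: W_def)
      finally show ?thesis .
    qed
    then show ?thesis by (simp add: W_def)
  qed
  have indB: "independent B"
    using oB eB by (intro pairwise_orthogonal_independent) auto
  have "dim (span B) = k" using dim_span_eq_card_independent[OF indB] cB by simp
  moreover have "k < DIM(real^'n)" using Suc.prems by (simp add: DIM_cart)
  ultimately have "span B \<noteq> UNIV" by (metis dim_UNIV less_irrefl)
  then obtain u where u: "u \<notin> span B" by auto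
  obtain y z where y: "y \<in> span B" and z: "\<And>w. w \<in> span B \<Longrightarrow> orthogonal z w" and uyz: "u = y + z"
    using orthogonal_subspace_decomp_exists by blast
  have zW: "z \<in> W" unfolding W_def using z span_base by (force simp: orthogonal_def inner_commute)
  have "z \<noteq> 0" using u y uyz by auto
  from rayleigh_eigen[OF symM sW iW zW this] obtain v where vW: "v \<in> W" and nv: "norm v = 1"
    and ev: "M *v v = (v \<bullet> (M *v v)) *\<^sub>R v" by blast
  have vB: "v \<notin> B"
  proof
    assume "v \<in> B"
    then have "v \<bullet> v = 0" using vW by (simp add: W_def)
    then show False using nv by simp
  qed
  show ?case
  proof (intro exI[of _ "insert v B"] conjI)
    show "finite (insert v B)" using fB by simp
    show "card (insert v B) = Suc k" using fB vB cB by simp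
    show "pairwise orthogonal (insert v B)"
      using oB vW by (auto simp: pairwise_insert W_def orthogonal_def inner_commute)
    show "\<forall>b\<in>insert v B. norm b = 1 \<and> M *v b = (b \<bullet> (M *v b)) *\<^sub>R b"
      using eB nv ev by auto
  qed
qed

lemma spectral:
  fixes M :: "real^'n^'n"
  assumes symM: "transpose M = M"
  obtains q :: "'n \<Rightarrow> real^'n" and \<mu> :: "'n \<Rightarrow> real"
  where "\<And>i j. q i \<bullet> q j = (if i = j then 1 else 0)" "\<And>i. M *v q i = \<mu> i *\<^sub>R q i"
proof -
  obtain B where fB: "finite B" and cB: "card B = CARD('n)" and oB: "pairwise orthogonal B"
    and eB: "\<forall>b\<in>B. norm b = 1 \<and> M *v b = (b \<bullet> (M *v b)) *\<^sub>R b"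
    using spectral_aux[OF symM, of "CARD('n)"] by auto
  obtain h where h: "bij_betw h (UNIV::'n set) B"
    using finite_same_card_bij[of "UNIV::'n set" B] fB cB by auto
  have hB: "h i \<in> B" for i using h by (auto simp: bij_betw_def)
  have hinj: "h i = h j \<Longrightarrow> i = j" for i j using h by (auto simp: bij_betw_def inj_on_def)
  show ?thesis
  proof (rule that[of h "\<lambda>i. h i \<bullet> (M *v h i)"])
    fix i j
    show "h i \<bullet> h j = (if i = j then 1 else 0)"
    proof (cases "i = j")
      case True
      then show ?thesis using eB hB by (simp add: norm_eq_1)
    next
      case False
      then have "h i \<noteq> h j" using hinj by blast
      then show ?thesis using oB hB False by (auto simp: pairwise_def orthogonal_def)
    qed
  next
    fix i show "M *v h i = (h i \<bullet> (M *v h i)) *\<^sub>R h i" using eB hB by blast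
  qed
qed

lemma poly_det:
  fixes P :: "(real poly)^'n^'n"
  shows "poly (det P) t = det (\<chi> i j. poly (P $ i $ j) t)"
  by (simp add: det_def poly_sum poly_prod)

lemma charpoly_eval:
  fixes M :: "real^'n^'n"
  shows "poly (charpoly M) t = det (mat t - M)"
  unfolding charpoly_def poly_det
  by (rule arg_cong[where f=det]) (simp add: vec_eq_iff mat_def)

lemma mat_mulv: "mat t *v (v::real^'n) = t *\<^sub>R v"
proof -
  have "(\<Sum>j\<in>UNIV. (if i = j then t else 0) * v $ j) = t * v $ i" for i
    by (simp add: if_distrib[of "\<lambda>x. x * _"] sum.delta cong: if_cong)
  then show ?thesis by (simp add: vec_eq_iff matrix_vector_mult_def mat_def)
qed

lemma conj_entry:
  fixes X :: "real^'n^'n"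
  shows "(transpose Q ** X ** Q) $ i $ j = column i Q \<bullet> (X *v column j Q)"
proof -
  have "(transpose Q ** X ** Q) $ i $ j = (\<Sum>k\<in>UNIV. (\<Sum>r\<in>UNIV. Q $ r $ i * X $ r $ k) * Q $ k $ j)"
    by (simp add: matrix_matrix_mult_def transpose_def)
  also have "\<dots> = (\<Sum>k\<in>UNIV. \<Sum>r\<in>UNIV. Q $ r $ i * (X $ r $ k * Q $ k $ j))"
    by (simp add: sum_distrib_right mult.assoc)
  also have "\<dots> = (\<Sum>r\<in>UNIV. \<Sum>k\<in>UNIV. Q $ r $ i * (X $ r $ k * Q $ k $ j))"
    by (rule sum.swap)
  also have "\<dots> = column i Q \<bullet> (X *v column j Q)"
    by (simp add: matrix_vector_mult_def inner_vec_def column_def sum_distrib_left)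
  finally show ?thesis .
qed

lemma charpoly_spectral:
  fixes M :: "real^'n^'n" and q :: "'n \<Rightarrow> real^'n"
  assumes orth: "\<And>i j. q i \<bullet> q j = (if i = j then 1 else 0)"
    and ev: "\<And>i. M *v q i = \<mu> i *\<^sub>R q i"
  shows "charpoly M = (\<Prod>i\<in>UNIV. [:- \<mu> i, 1:])"
proof -
  define Q :: "real^'n^'n" where "Q = (\<chi> r c. q c $ r)"
  have colQ: "column c Q = q c" for c by (simp add: Q_def column_def vec_eq_iff)
  have oQ: "orthogonal_matrix Q"
    unfolding orthogonal_matrix_orthonormal_columns colQ
    using orth by (auto simp: norm_eq_1 orthogonal_def)
  have dQ: "det (transpose Q) * det Q = 1"
    using det_orthogonal_matrix[OF oQ] by (auto simp: det_transpose)
  have "poly (charpoly M) t = poly (\<Prod>i\<in>UNIV. [:- \<mu> i, 1:]) t" for t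
  proof -
    have "det (mat t - M) = det (transpose Q ** (mat t - M) ** Q)"
      using dQ by (simp add: det_mul)
    also have "\<dots> = (\<Prod>i\<in>UNIV. t - \<mu> i)"
    proof (subst det_diagonal)
      fix i j :: 'n assume "i \<noteq> j"
      then show "(transpose Q ** (mat t - M) ** Q) $ i $ j = 0"
        unfolding conj_entry colQ
        by (simp add: matrix_vector_mult_diff_rdistrib ev inner_diff_right orth mat_mulv)
    next
      show "(\<Prod>i\<in>UNIV. (transpose Q ** (mat t - M) ** Q) $ i $ i) = (\<Prod>i\<in>UNIV. t - \<mu> i)"
        unfolding conj_entry colQ
        by (simp add: matrix_vector_mult_diff_rdistrib ev inner_diff_right orth mat_mulv)
    qed
    finally show ?thesis by (simp add: charpoly_eval poly_prod)
  qed
  then show ?thesis using poly_eq_poly_eq_iff by blast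
qed

lemma proots_charpoly_spectral:
  fixes M :: "real^'n^'n" and q :: "'n \<Rightarrow> real^'n"
  assumes orth: "\<And>i j. q i \<bullet> q j = (if i = j then 1 else 0)"
    and ev: "\<And>i. M *v q i = \<mu> i *\<^sub>R q i"
  shows "proots (charpoly M) = (\<Sum>i\<in>UNIV. {#\<mu> i#})"
  unfolding charpoly_spectral[OF orth ev]
  by (subst proots_prod) auto



lemma expand_orth:
  fixes q :: "'n \<Rightarrow> real^'n"
  assumes orth: "\<And>i j. q i \<bullet> q j = (if i = j then 1 else 0)"
  shows "z = (\<Sum>i\<in>UNIV. (z \<bullet> q i) *\<^sub>R q i)"
proof -
  have inj: "inj q"
  proof (rule injI)
    fix i j assume "q i = q j"
    then have "q i \<bullet> q j = 1" using orth[of j j] by simp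
    then show "i = j" using orth[of i j] by (auto split: if_splits)
  qed
  have po: "pairwise orthogonal (range q)"
    using orth inj by (auto simp: pairwise_def orthogonal_def inj_eq)
  have n1: "\<And>b. b \<in> range q \<Longrightarrow> norm b = 1" using orth by (auto simp: norm_eq_1)
  have "0 \<notin> range q" using n1 by (metis norm_zero zero_neq_one)
  then have ind: "independent (range q)"
    using po by (intro pairwise_orthogonal_independent) auto
  have "card (range q) = CARD('n)" using inj by (simp add: card_image)
  then have "dim (UNIV :: (real^'n) set) \<le> card (range q)" by (simp add: DIM_cart)
  then have "UNIV \<subseteq> span (range q)" using card_ge_dim_independent[OF _ ind] by blast
  then have "(\<Sum>b\<in>range q. (z \<bullet> b) *\<^sub>R b) = z"
    using orthonormal_basis_expand[OF po n1] by auto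
  then show ?thesis using inj by (simp add: sum.reindex)
qed

lemma size_filter_sum:
  fixes \<mu> :: "'a \<Rightarrow> real"
  assumes "finite A"
  shows "size (filter_mset P (\<Sum>i\<in>A. {#\<mu> i#})) = card {i\<in>A. P (\<mu> i)}"
  using assms
proof (induction A rule: finite_induct)
  case empty then show ?case by simp
next
  case (insert x A)
  have "{i \<in> insert x A. P (\<mu> i)} = (if P (\<mu> x) then insert x {i\<in>A. P (\<mu> i)} else {i\<in>A. P (\<mu> i)})"
    by auto
  then show ?case using insert by (simp add: filter_union_mset)
qed

lemma sv_bound:
  fixes C :: "real^'n^'n" and e :: "real^'n"
  assumes n2: "CARD('n) \<ge> 2" and Ce: "C *v e = 0" and e0: "e \<noteq> 0"
    and sp: "singular_value C (CARD('n) - 1) > 0"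
    and ze: "z \<bullet> e = 0"
  shows "(singular_value C (CARD('n) - 1))\<^sup>2 * (norm z)\<^sup>2 \<le> (norm (C *v z))\<^sup>2"
proof -
  define M where "M = transpose C ** C"
  have symM: "transpose M = M" by (simp add: M_def matrix_transpose_mul)
  obtain q :: "'n \<Rightarrow> real^'n" and \<mu> where orth: "\<And>i j. q i \<bullet> q j = (if i = j then 1 else 0)"
    and ev: "\<And>i. M *v q i = \<mu> i *\<^sub>R q i"
    using spectral[OF symM] by blast
  define R where "R = (\<Sum>i\<in>UNIV. {#\<mu> i#})"
  have PR: "proots (charpoly M) = R" unfolding R_def by (rule proots_charpoly_spectral[OF orth ev])
  define L where "L = sorted_list_of_multiset R"
  have mL: "mset L = R" by (simp add: L_def)
  have sL: "sorted L" by (simp add: L_def)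
  have "size R = CARD('n)" unfolding R_def using size_filter_sum[of UNIV "\<lambda>_. True" \<mu>] by simp
  then have lenL: "length L = CARD('n)" using mL by (metis size_mset)
  define s where "s = L ! 1"
  have sv: "singular_value C (CARD('n) - 1) = sqrt s"
  proof -
    have "singular_value C (CARD('n) - 1) = rev (map sqrt L) ! (CARD('n) - 2)"
      unfolding singular_value_def M_def[symmetric] PR L_def by (simp add: diff_diff_add numeral_2_eq_2)
    also have "\<dots> = map sqrt L ! (length (map sqrt L) - Suc (CARD('n) - 2))"
      using n2 lenL by (intro rev_nth) simp
    also have "\<dots> = sqrt s" using n2 lenL by (simp add: s_def Suc_diff_Suc numeral_2_eq_2)
    finally show ?thesis .
  qed
  have s0: "s > 0" using sp sv by simp
  have sv2: "(singular_value C (CARD('n) - 1))\<^sup>2 = s" using sv s0 by simp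
  have card1: "card {i\<in>UNIV. \<mu> i < s} \<le> 1"
  proof -
    obtain a b rest where Lab: "L = a # b # rest"
      using lenL n2 by (metis Suc_le_length_iff numeral_2_eq_2)
    have bs: "b = s" using Lab by (simp add: s_def)
    have "\<forall>x\<in>set rest. s \<le> x" using sL Lab bs by simp
    then have "filter (\<lambda>x. x < s) rest = []" by (auto simp: filter_empty_conv)
    then have "length (filter (\<lambda>x. x < s) L) \<le> 1" using Lab bs by simp
    moreover have "size (filter_mset (\<lambda>x. x < s) R) = length (filter (\<lambda>x. x < s) L)"
      by (metis mL mset_filter size_mset)
    ultimately show ?thesis using size_filter_sum[of UNIV "\<lambda>x. x < s" \<mu>] by (simp add: R_def)
  qed
  have uniq: "i = j" if "\<mu> i < s" "\<mu> j < s" for i j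
  proof (rule ccontr)
    assume "i \<noteq> j"
    then have "card {i, j} = 2" by simp
    moreover have "{i, j} \<subseteq> {i\<in>UNIV. \<mu> i < s}" using that by auto
    ultimately have "2 \<le> card {i\<in>UNIV. \<mu> i < s}" by (metis card_mono finite)
    then show False using card1 by simp
  qed
  have Me: "M *v e = 0" by (simp add: M_def Ce flip: matrix_vector_mul_assoc)
  have zq: "z \<bullet> q i = 0" if "\<mu> i < s" for i
  proof -
    have qe: "q j \<bullet> e = 0" if "j \<noteq> i" for j
    proof -
      have "\<mu> j \<ge> s"
      proof (rule ccontr)
        assume "\<not> s \<le> \<mu> j"
        then have "\<mu> j < s" by simp
        then show False using uniq[of i j] \<open>\<mu> i < s\<close> that by simp
      qed
      then have "\<mu> j \<noteq> 0" using s0 by simp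
      moreover have "\<mu> j * (q j \<bullet> e) = 0"
        using sym_dot[OF symM, of "q j" e] by (simp add: ev Me)
      ultimately show ?thesis by simp
    qed
    have "e = (\<Sum>j\<in>UNIV. (e \<bullet> q j) *\<^sub>R q j)" by (rule expand_orth[OF orth])
    also have "\<dots> = (e \<bullet> q i) *\<^sub>R q i + (\<Sum>j\<in>UNIV - {i}. (e \<bullet> q j) *\<^sub>R q j)"
      by (rule sum.remove) auto
    also have "(\<Sum>j\<in>UNIV - {i}. (e \<bullet> q j) *\<^sub>R q j) = 0"
      by (rule sum.neutral) (use qe in \<open>auto simp: inner_commute\<close>)
    finally have ee: "e = (e \<bullet> q i) *\<^sub>R q i" by simp
    then have "e \<bullet> q i \<noteq> 0" using e0 by (metis scale_zero_left)
    moreover have "z \<bullet> e = (e \<bullet> q i) * (z \<bullet> q i)" by (subst ee) simp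
    ultimately show ?thesis using ze by simp
  qed
  define a where "a i = z \<bullet> q i" for i
  have zexp: "z = (\<Sum>i\<in>UNIV. a i *\<^sub>R q i)" unfolding a_def by (rule expand_orth[OF orth])
  have nz: "(norm z)\<^sup>2 = (\<Sum>i\<in>UNIV. (a i)\<^sup>2)"
  proof -
    have "(norm z)\<^sup>2 = z \<bullet> z" by (simp add: power2_norm_eq_inner)
    also have "\<dots> = (\<Sum>i\<in>UNIV. a i * (z \<bullet> q i))" by (subst (2) zexp) (simp add: inner_sum_right)
    finally show ?thesis by (simp add: a_def power2_eq_square)
  qed
  have nCz: "(norm (C *v z))\<^sup>2 = (\<Sum>i\<in>UNIV. \<mu> i * (a i)\<^sup>2)"
  proof -
    have "(norm (C *v z))\<^sup>2 = (C *v z) \<bullet> (C *v z)" by (simp add: power2_norm_eq_inner)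
    also have "\<dots> = ((C *v z) v* C) \<bullet> z" by (simp add: dot_lmul_matrix)
    also have "\<dots> = (M *v z) \<bullet> z" by (simp add: M_def flip: matrix_vector_mul_assoc transpose_matrix_vector)
    also have "M *v z = (\<Sum>i\<in>UNIV. (a i * \<mu> i) *\<^sub>R q i)"
      by (subst zexp) (simp add: vec.sum matrix_vector_mult_scaleR ev)
    also have "(\<Sum>i\<in>UNIV. (a i * \<mu> i) *\<^sub>R q i) \<bullet> z = (\<Sum>i\<in>UNIV. a i * \<mu> i * (q i \<bullet> z))"
      by (simp add: inner_sum_left)
    finally show ?thesis by (simp add: a_def inner_commute power2_eq_square algebra_simps)
  qed
  have "s * (norm z)\<^sup>2 \<le> (norm (C *v z))\<^sup>2"
    unfolding nz nCz sum_distrib_left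
  proof (rule sum_mono)
    fix i
    show "s * (a i)\<^sup>2 \<le> \<mu> i * (a i)\<^sup>2"
    proof (cases "\<mu> i < s")
      case True then show ?thesis using zq by (simp add: a_def)
    next
      case False then show ?thesis by (simp add: mult_right_mono)
    qed
  qed
  then show ?thesis using sv2 by simp
qed



definition F2 :: "real^'n^'n \<Rightarrow> real" where
  "F2 C = (\<Sum>l\<in>UNIV. (norm (C $ l))\<^sup>2)"

lemma pmf_index:
  fixes C :: "real^'n^'n"
  assumes "F2 C > 0"
  shows "pmf (index_pmf C) j = (norm (C $ j))\<^sup>2 / F2 C"
proof -
  have "(\<integral>\<^sup>+ x. ennreal ((norm (C $ x))\<^sup>2 / F2 C) \<partial>count_space UNIV) = 1"
  proof -
    have "(\<integral>\<^sup>+ x. ennreal ((norm (C $ x))\<^sup>2 / F2 C) \<partial>count_space UNIV)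
        = (\<Sum>x\<in>UNIV. ennreal ((norm (C $ x))\<^sup>2 / F2 C))"
      by (simp add: nn_integral_count_space_finite)
    also have "\<dots> = ennreal (\<Sum>x\<in>UNIV. (norm (C $ x))\<^sup>2 / F2 C)"
      using assms by (intro sum_ennreal) (auto intro: divide_nonneg_pos)
    also have "(\<Sum>x\<in>UNIV. (norm (C $ x))\<^sup>2 / F2 C) = 1"
      using assms by (simp add: sum_divide_distrib[symmetric] F2_def)
    finally show ?thesis by simp
  qed
  then show ?thesis unfolding index_pmf_def F2_def[symmetric]
    by (subst pmf_embed_pmf) (auto simp: F2_def intro!: divide_nonneg_nonneg sum_nonneg)
qed

lemma exp_index:
  fixes C :: "real^'n^'n" and h :: "'n \<Rightarrow> real"
  assumes "F2 C > 0"
  shows "measure_pmf.expectation (index_pmf C) h = (\<Sum>j\<in>UNIV. h j * ((norm (C $ j))\<^sup>2 / F2 C))"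
  by (subst integral_measure_pmf_real[where A=UNIV]) (auto simp: pmf_index[OF assms])

lemma finite_iterate: "finite (set_pmf (iterate_pmf C y0 k))"
  by (induction k) auto

lemma exp_bind:
  fixes g :: "'b \<Rightarrow> real"
  assumes fM: "finite (set_pmf M)" and fN: "\<And>x. x \<in> set_pmf M \<Longrightarrow> finite (set_pmf (N x))"
    and g0: "\<And>y. g y \<ge> 0"
  shows "measure_pmf.expectation (bind_pmf M N) g = measure_pmf.expectation M (\<lambda>x. measure_pmf.expectation (N x) g)"
proof -
  have fB: "finite (set_pmf (bind_pmf M N))" using fM fN by (auto simp: set_bind_pmf)
  have "ennreal (measure_pmf.expectation (bind_pmf M N) g) = (\<integral>\<^sup>+ y. ennreal (g y) \<partial>bind_pmf M N)"
    using fB g0 by (intro nn_integral_eq_integral[symmetric] integrable_measure_pmf_finite) auto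
  also have "\<dots> = (\<integral>\<^sup>+ x. \<integral>\<^sup>+ y. ennreal (g y) \<partial>N x \<partial>M)" by simp
  also have "\<dots> = (\<integral>\<^sup>+ x. ennreal (measure_pmf.expectation (N x) g) \<partial>M)"
    using fN g0 by (intro nn_integral_cong_AE)
      (auto simp: AE_measure_pmf_iff intro!: nn_integral_eq_integral integrable_measure_pmf_finite)
  also have "\<dots> = ennreal (measure_pmf.expectation M (\<lambda>x. measure_pmf.expectation (N x) g))"
    using fM g0 by (intro nn_integral_eq_integral integrable_measure_pmf_finite) (auto intro!: integral_nonneg)
  finally show ?thesis using g0
    by (subst (asm) ennreal_inj) (auto intro!: integral_nonneg)
qed

lemma exp_iterate_Suc:
  fixes C :: "real^'n^'n" and g :: "real^'n \<Rightarrow> real"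
  assumes F: "F2 C > 0" and g0: "\<And>y. g y \<ge> 0"
  shows "measure_pmf.expectation (iterate_pmf C y0 (Suc k)) g =
    measure_pmf.expectation (iterate_pmf C y0 k) (\<lambda>y. \<Sum>j\<in>UNIV. g (kstep C y j) * ((norm (C $ j))\<^sup>2 / F2 C))"
  unfolding iterate_pmf.simps
  by (subst exp_bind) (auto simp: finite_iterate g0 exp_index[OF F])

lemma exp_iterate_0:
  fixes g :: "real^'n \<Rightarrow> real"
  shows "measure_pmf.expectation (iterate_pmf C y0 0) g = g y0"
  by (simp add: expectation_return_pmf)



definition Pj :: "real^'n \<Rightarrow> real^'n \<Rightarrow> real^'n" where
  "Pj e y = y - ((y \<bullet> e) / (e \<bullet> e)) *\<^sub>R e"

lemma row_dot: "(C *v z) $ j = C $ j \<bullet> z"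
  by (simp add: matrix_vector_mult_def inner_vec_def)

lemma kstep_e:
  assumes "C $ i \<bullet> e = 0"
  shows "kstep C y i \<bullet> e = y \<bullet> e"
  using assms by (simp add: kstep_def inner_diff_left)

lemma kstep_norm:
  "(norm (kstep C y i))\<^sup>2 = (norm y)\<^sup>2 - (y \<bullet> (C $ i /\<^sub>R norm (C $ i)))\<^sup>2"
proof (cases "C $ i = 0")
  case True then show ?thesis by (simp add: kstep_def)
next
  case False
  define u where "u = C $ i /\<^sub>R norm (C $ i)"
  have "norm u = 1" using False by (simp add: u_def)
  then have uu: "u \<bullet> u = 1" by (simp add: norm_eq_1)
  have "(norm (kstep C y i))\<^sup>2 = (y - (y \<bullet> u) *\<^sub>R u) \<bullet> (y - (y \<bullet> u) *\<^sub>R u)"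
    by (simp add: kstep_def u_def power2_norm_eq_inner)
  also have "\<dots> = y \<bullet> y - (y \<bullet> u)\<^sup>2"
    using uu by (simp add: inner_diff_left inner_diff_right inner_commute power2_eq_square algebra_simps)
  finally show ?thesis by (simp add: u_def power2_norm_eq_inner)
qed

lemma Pj_kstep:
  assumes "C $ i \<bullet> e = 0"
  shows "Pj e (kstep C y i) = kstep C (Pj e y) i"
proof -
  have "e \<bullet> C $ i = 0" using assms by (simp add: inner_commute)
  then show ?thesis using kstep_e[OF assms, of y]
    by (simp add: Pj_def kstep_def inner_diff_left inner_diff_right inner_commute algebra_simps)
qed

lemma Pj_e: "e \<noteq> 0 \<Longrightarrow> Pj e y \<bullet> e = 0"
  by (simp add: Pj_def inner_diff_left)

lemma Pj_norm:
  assumes "e \<noteq> 0"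
  shows "(norm y)\<^sup>2 = (norm (Pj e y))\<^sup>2 + (y \<bullet> e)\<^sup>2 / (e \<bullet> e)"
proof -
  have "(norm (Pj e y))\<^sup>2 = y \<bullet> y - (y \<bullet> e)\<^sup>2 / (e \<bullet> e)"
    unfolding Pj_def power2_norm_eq_inner using assms
    by (simp add: inner_diff_left inner_diff_right inner_commute power2_eq_square field_simps)
  then show ?thesis by (simp add: power2_norm_eq_inner)
qed

lemma norm_sq_sum: "(norm (v::real^'n))\<^sup>2 = (\<Sum>j\<in>UNIV. (v $ j)\<^sup>2)"
  unfolding power2_norm_eq_inner by (simp add: inner_vec_def power2_eq_square)

lemma weighted:
  fixes C :: "real^'n^'n"
  assumes F: "F2 C > 0"
  shows "(\<Sum>j\<in>UNIV. (norm (kstep C z j))\<^sup>2 * ((norm (C $ j))\<^sup>2 / F2 C))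
         = (norm z)\<^sup>2 - (norm (C *v z))\<^sup>2 / F2 C"
proof -
  have trm: "(norm (kstep C z j))\<^sup>2 * ((norm (C $ j))\<^sup>2 / F2 C)
      = (norm z)\<^sup>2 * ((norm (C $ j))\<^sup>2 / F2 C) - (C $ j \<bullet> z)\<^sup>2 / F2 C" for j
  proof (cases "C $ j = 0")
    case True then show ?thesis by (simp add: kstep_def)
  next
    case False
    then show ?thesis unfolding kstep_norm using F
      by (simp add: field_simps power2_eq_square inner_commute)
  qed
  have s1: "(\<Sum>j\<in>UNIV. (norm (C $ j))\<^sup>2 / F2 C) = 1"
    using F by (simp add: sum_divide_distrib[symmetric] F2_def)
  have s2: "(\<Sum>j\<in>UNIV. (C $ j \<bullet> z)\<^sup>2) = (norm (C *v z))\<^sup>2"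
    by (simp add: norm_sq_sum row_dot)
  show ?thesis
    unfolding trm sum_subtractf sum_distrib_left[symmetric] s1
    by (simp add: sum_divide_distrib[symmetric] s2)
qed

lemma contraction:
  fixes C :: "real^'n^'n" and e :: "real^'n"
  assumes F: "F2 C > 0" and e0: "e \<noteq> 0" and rows: "\<And>i. C $ i \<bullet> e = 0"
    and sig: "\<And>z. z \<bullet> e = 0 \<Longrightarrow> s * (norm z)\<^sup>2 \<le> (norm (C *v z))\<^sup>2"
    and q0: "0 \<le> 1 - s / F2 C"
  shows "measure_pmf.expectation (iterate_pmf C y0 k) (\<lambda>y. (norm (Pj e y))\<^sup>2)
          \<le> (1 - s / F2 C) ^ k * (norm (Pj e y0))\<^sup>2"
proof (induction k)
  case 0 then show ?case by (simp add: exp_iterate_0)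
next
  case (Suc k)
  let ?q = "1 - s / F2 C"
  have pt: "(\<Sum>j\<in>UNIV. (norm (Pj e (kstep C y j)))\<^sup>2 * ((norm (C $ j))\<^sup>2 / F2 C))
      \<le> ?q * (norm (Pj e y))\<^sup>2" for y
  proof -
    have "(\<Sum>j\<in>UNIV. (norm (Pj e (kstep C y j)))\<^sup>2 * ((norm (C $ j))\<^sup>2 / F2 C))
        = (\<Sum>j\<in>UNIV. (norm (kstep C (Pj e y) j))\<^sup>2 * ((norm (C $ j))\<^sup>2 / F2 C))"
      by (simp add: Pj_kstep[OF rows])
    also have "\<dots> = (norm (Pj e y))\<^sup>2 - (norm (C *v Pj e y))\<^sup>2 / F2 C"
      by (rule weighted[OF F])
    also have "\<dots> \<le> (norm (Pj e y))\<^sup>2 - s * (norm (Pj e y))\<^sup>2 / F2 C"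
      using sig[OF Pj_e[OF e0]] F by (simp add: divide_right_mono)
    also have "\<dots> = ?q * (norm (Pj e y))\<^sup>2" by (simp add: algebra_simps)
    finally show ?thesis .
  qed
  have "measure_pmf.expectation (iterate_pmf C y0 (Suc k)) (\<lambda>y. (norm (Pj e y))\<^sup>2)
      = measure_pmf.expectation (iterate_pmf C y0 k)
          (\<lambda>y. \<Sum>j\<in>UNIV. (norm (Pj e (kstep C y j)))\<^sup>2 * ((norm (C $ j))\<^sup>2 / F2 C))"
    by (rule exp_iterate_Suc[OF F]) simp
  also have "\<dots> \<le> measure_pmf.expectation (iterate_pmf C y0 k) (\<lambda>y. ?q * (norm (Pj e y))\<^sup>2)"
    by (intro integral_mono integrable_measure_pmf_finite finite_iterate pt)
  also have "\<dots> = ?q * measure_pmf.expectation (iterate_pmf C y0 k) (\<lambda>y. (norm (Pj e y))\<^sup>2)"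
    by simp
  also have "\<dots> \<le> ?q * (?q ^ k * (norm (Pj e y0))\<^sup>2)"
    using Suc.IH q0 by (rule mult_left_mono)
  finally show ?case by simp
qed

lemma iter_inv:
  assumes rows: "\<And>i. C $ i \<bullet> e = 0"
  shows "y \<in> set_pmf (iterate_pmf C y0 k) \<Longrightarrow> y \<bullet> e = y0 \<bullet> e"
  by (induction k arbitrary: y) (auto simp: kstep_e[OF rows])

lemma kstep_norm_le: "norm (kstep C y i) \<le> norm y"
proof -
  have "(norm (kstep C y i))\<^sup>2 \<le> (norm y)\<^sup>2" unfolding kstep_norm by simp
  then show ?thesis by (simp add: power2_le_iff_abs_le)
qed

lemma iter_norm:
  shows "y \<in> set_pmf (iterate_pmf C y0 k) \<Longrightarrow> norm y \<le> norm y0"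
proof (induction k arbitrary: y)
  case 0 then show ?case by simp
next
  case (Suc k)
  then obtain y' i where "y' \<in> set_pmf (iterate_pmf C y0 k)" "y = kstep C y' i" by auto
  then show ?case using Suc.IH kstep_norm_le order_trans by metis
qed

lemma exp_lower:
  fixes C :: "real^'n^'n" and e :: "real^'n"
  assumes rows: "\<And>i. C $ i \<bullet> e = 0" and e0: "e \<noteq> 0"
  shows "(z \<bullet> e)\<^sup>2 / (e \<bullet> e) \<le> measure_pmf.expectation (iterate_pmf C z k) (\<lambda>y. (norm y)\<^sup>2)"
proof -
  have "measure_pmf.expectation (iterate_pmf C z k) (\<lambda>y. (z \<bullet> e)\<^sup>2 / (e \<bullet> e))
      \<le> measure_pmf.expectation (iterate_pmf C z k) (\<lambda>y. (norm y)\<^sup>2)"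
  proof (intro integral_mono_AE integrable_measure_pmf_finite finite_iterate)
    show "AE y in measure_pmf (iterate_pmf C z k). (z \<bullet> e)\<^sup>2 / (e \<bullet> e) \<le> (norm y)\<^sup>2"
      unfolding AE_measure_pmf_iff
    proof
      fix y assume y: "y \<in> set_pmf (iterate_pmf C z k)"
      have "(z \<bullet> e)\<^sup>2 / (e \<bullet> e) = (y \<bullet> e)\<^sup>2 / (e \<bullet> e)" using iter_inv[OF rows y] by simp
      also have "\<dots> \<le> (norm y)\<^sup>2" using Pj_norm[OF e0, of y] by simp
      finally show "(z \<bullet> e)\<^sup>2 / (e \<bullet> e) \<le> (norm y)\<^sup>2" .
    qed
  qed
  then show ?thesis by simp
qed

lemma exp_upper:
  fixes C :: "real^'n^'n"
  shows "measure_pmf.expectation (iterate_pmf C z k) (\<lambda>y. (norm y)\<^sup>2) \<le> (norm z)\<^sup>2"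
proof -
  have "measure_pmf.expectation (iterate_pmf C z k) (\<lambda>y. (norm y)\<^sup>2)
      \<le> measure_pmf.expectation (iterate_pmf C z k) (\<lambda>y. (norm z)\<^sup>2)"
  proof (intro integral_mono_AE integrable_measure_pmf_finite finite_iterate)
    show "AE y in measure_pmf (iterate_pmf C z k). (norm y)\<^sup>2 \<le> (norm z)\<^sup>2"
      unfolding AE_measure_pmf_iff using iter_norm by (auto intro: power_mono)
  qed
  then show ?thesis by simp
qed

lemma exp_cont:
  fixes C :: "real^'n^'n" and g :: "real^'n \<Rightarrow> real"
  assumes F: "F2 C > 0"
  shows "continuous_on UNIV g \<Longrightarrow> (\<And>y. g y \<ge> 0) \<Longrightarrow>
    continuous_on UNIV (\<lambda>z. measure_pmf.expectation (iterate_pmf C z k) g)"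
proof (induction k arbitrary: g)
  case 0 then show ?case by (simp add: expectation_return_pmf)
next
  case (Suc k)
  let ?g = "\<lambda>y. \<Sum>j\<in>UNIV. g (kstep C y j) * ((norm (C $ j))\<^sup>2 / F2 C)"
  have "continuous_on UNIV ?g" unfolding kstep_def
    by (intro continuous_intros continuous_on_compose2[OF Suc.prems(1)]) auto
  moreover have "?g y \<ge> 0" for y using Suc.prems(2) F by (auto intro!: sum_nonneg)
  ultimately have "continuous_on UNIV (\<lambda>z. measure_pmf.expectation (iterate_pmf C z k) ?g)"
    using Suc.IH by blast
  moreover have "(\<lambda>z. measure_pmf.expectation (iterate_pmf C z (Suc k)) g)
      = (\<lambda>z. measure_pmf.expectation (iterate_pmf C z k) ?g)"
    by (rule ext, rule exp_iterate_Suc[OF F Suc.prems(2)])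
  ultimately show ?case by metis
qed



lemma AL:
  fixes u :: "'a \<Rightarrow> real"
  assumes fI: "finite I" and TI: "T \<subseteq> I" and a0: "a \<ge> 0" and su: "(\<Sum>i\<in>I. u i) = 0"
    and uT: "\<And>i. i \<in> T \<Longrightarrow> u i \<le> - a"
  shows "real (card T) * real (card I) * a\<^sup>2 \<le> (real (card I) - real (card T)) * (\<Sum>i\<in>I. (u i)\<^sup>2)"
proof -
  have fT: "finite T" using fI TI finite_subset by blast
  define t where "t = real (card T)"
  define m where "m = real (card (I - T))"
  have mt: "real (card I) = m + t"
    using card_Diff_subset[OF fT TI] card_mono[OF fI TI] by (simp add: m_def t_def of_nat_diff)
  have h1: "t * a\<^sup>2 \<le> (\<Sum>i\<in>T. (u i)\<^sup>2)"
  proof -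
    have "(\<Sum>i\<in>T. a\<^sup>2) \<le> (\<Sum>i\<in>T. (u i)\<^sup>2)"
    proof (rule sum_mono)
      fix i assume "i \<in> T"
      then have "a \<le> - u i" using uT by force
      then have "a\<^sup>2 \<le> (- u i)\<^sup>2" using a0 by (intro power_mono) auto
      then show "a\<^sup>2 \<le> (u i)\<^sup>2" by simp
    qed
    then show ?thesis by (simp add: t_def)
  qed
  have split: "(\<Sum>i\<in>I. f i) = (\<Sum>i\<in>T. f i) + (\<Sum>i\<in>I - T. f i)" for f :: "'a \<Rightarrow> real"
    using sum.subset_diff[OF TI fI] by (simp add: add.commute)
  have "(\<Sum>i\<in>T. u i) \<le> (\<Sum>i\<in>T. - a)" using uT by (intro sum_mono) auto
  then have "(\<Sum>i\<in>T. u i) \<le> - t * a" by (simp add: t_def)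
  then have h2: "t * a \<le> (\<Sum>i\<in>I - T. u i)" using split[of u] su by simp
  have "(\<Sum>i\<in>I - T. u i * 1)\<^sup>2 \<le> (\<Sum>i\<in>I - T. (u i)\<^sup>2) * (\<Sum>i\<in>I - T. 1\<^sup>2)"
    by (rule Cauchy_Schwarz_ineq_sum)
  then have h3: "(\<Sum>i\<in>I - T. u i)\<^sup>2 \<le> m * (\<Sum>i\<in>I - T. (u i)\<^sup>2)" by (simp add: m_def mult.commute)
  have "(t * a)\<^sup>2 \<le> (\<Sum>i\<in>I - T. u i)\<^sup>2"
    using h2 a0 by (intro power_mono) (auto simp: t_def)
  then have h4: "t\<^sup>2 * a\<^sup>2 \<le> m * (\<Sum>i\<in>I - T. (u i)\<^sup>2)" using h3 by (simp add: power_mult_distrib)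
  have m0: "m \<ge> 0" by (simp add: m_def)
  have "m * (t * a\<^sup>2) \<le> m * (\<Sum>i\<in>T. (u i)\<^sup>2)" using h1 m0 by (rule mult_left_mono)
  then have "t * (m + t) * a\<^sup>2 \<le> m * (\<Sum>i\<in>I. (u i)\<^sup>2)"
    using h4 split[of "\<lambda>i. (u i)\<^sup>2"] by (simp add: algebra_simps power2_eq_square)
  then show ?thesis using mt by (simp add: t_def)
qed

lemma sign_bound:
  fixes e y :: "real^'n"
  assumes pm: "\<And>i. e $ i = 1 \<or> e $ i = -1"
  shows "real (min (card (wrong_signs e y)) (CARD('n) - card (wrong_signs e y))) * (norm y)\<^sup>2
         \<le> real CARD('n) * (norm (Pj e y))\<^sup>2"
proof -
  define n where "n = real CARD('n)"
  define S where "S = wrong_signs e y"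
  define s where "s = real (card S)"
  have sn: "card S \<le> CARD('n)" by (rule card_mono) auto
  have e2: "(e $ i)\<^sup>2 = 1" for i using pm[of i] by auto
  have ee: "e \<bullet> e = n" by (simp add: inner_vec_def n_def e2[unfolded power2_eq_square])
  have n0: "n > 0" by (simp add: n_def)
  have e0: "e \<noteq> 0"
  proof
    assume "e = 0" then show False using ee n0 by simp
  qed
  define \<alpha> where "\<alpha> = (y \<bullet> e) / n"
  define z where "z = Pj e y"
  have zi: "z $ i = y $ i - \<alpha> * e $ i" for i by (simp add: z_def Pj_def \<alpha>_def ee)
  have ny: "(norm y)\<^sup>2 = (norm z)\<^sup>2 + n * \<alpha>\<^sup>2"
    using Pj_norm[OF e0, of y] n0 by (simp add: z_def ee \<alpha>_def power2_eq_square field_simps)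
  define u where "u i = e $ i * z $ i" for i
  have su: "(\<Sum>i\<in>UNIV. u i) = 0" using Pj_e[OF e0, of y]
    by (simp add: u_def z_def inner_vec_def mult.commute)
  have su2: "(\<Sum>i\<in>UNIV. (u i)\<^sup>2) = (norm z)\<^sup>2"
    by (simp add: u_def norm_sq_sum power_mult_distrib e2)
  have ui: "u i = e $ i * y $ i - \<alpha>" for i
    using e2[of i] by (simp add: u_def zi algebra_simps power2_eq_square)
  have wrong: "e $ i * y $ i \<le> 0" if "i \<in> S" for i
  proof -
    from pm[of i] consider "e $ i = 1" | "e $ i = -1" by blast
    then show ?thesis using that by cases (auto simp: S_def wrong_signs_def sgn_if split: if_splits)
  qed
  have right: "e $ i * y $ i > 0" if "i \<notin> S" for i
  proof -
    from pm[of i] consider "e $ i = 1" | "e $ i = -1" by blast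
    then show ?thesis using that by cases (auto simp: S_def wrong_signs_def sgn_if split: if_splits)
  qed
  have cardUNIV: "real (card (UNIV::'n set)) = n" by (simp add: n_def)
  show ?thesis
  proof (cases "\<alpha> \<ge> 0")
    case True
    have "s * n * \<alpha>\<^sup>2 \<le> (n - s) * (norm z)\<^sup>2"
      using AL[of UNIV S \<alpha> u] True su wrong ui su2 by (auto simp: s_def n_def)
    have "real (min (card S) (CARD('n) - card S)) * (norm y)\<^sup>2 \<le> s * (norm y)\<^sup>2"
      by (intro mult_right_mono) (auto simp: s_def)
    also have "\<dots> = s * (norm z)\<^sup>2 + s * n * \<alpha>\<^sup>2" by (simp add: ny algebra_simps)
    also have "\<dots> \<le> s * (norm z)\<^sup>2 + (n - s) * (norm z)\<^sup>2"
      using \<open>s * n * \<alpha>\<^sup>2 \<le> (n - s) * (norm z)\<^sup>2\<close> by simp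
    also have "\<dots> = n * (norm z)\<^sup>2" by (simp add: algebra_simps)
    finally show ?thesis by (simp add: S_def n_def z_def)
  next
    case False
    define T where "T = UNIV - S"
    have cT: "real (card T) = n - s"
      using sn by (simp add: T_def card_Diff_subset s_def n_def of_nat_diff)
    have "real (card T) * n * (- \<alpha>)\<^sup>2 \<le> (n - real (card T)) * (\<Sum>i\<in>UNIV. (- u i)\<^sup>2)"
    proof -
      have h: "- u i \<le> - (- \<alpha>)" if "i \<in> T" for i
        using right[of i] that ui[of i] by (simp add: T_def)
      have "(\<Sum>i\<in>UNIV. - u i) = 0" using su by (simp add: sum_negf)
      moreover have a0: "0 \<le> - \<alpha>" using False by simp
      ultimately show ?thesis
        using AL[of UNIV T "- \<alpha>" "\<lambda>i. - u i"] h by (simp add: n_def)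
    qed
    then have key: "(n - s) * n * \<alpha>\<^sup>2 \<le> s * (norm z)\<^sup>2" using cT su2 by simp
    have "real (min (card S) (CARD('n) - card S)) * (norm y)\<^sup>2 \<le> (n - s) * (norm y)\<^sup>2"
      using sn by (intro mult_right_mono) (auto simp: s_def n_def of_nat_diff)
    also have "\<dots> = (n - s) * (norm z)\<^sup>2 + (n - s) * n * \<alpha>\<^sup>2" by (simp add: ny algebra_simps)
    also have "\<dots> \<le> (n - s) * (norm z)\<^sup>2 + s * (norm z)\<^sup>2" using key by simp
    also have "\<dots> = n * (norm z)\<^sup>2" by (simp add: algebra_simps)
    finally show ?thesis by (simp add: S_def n_def z_def)
  qed
qed



definition flip :: "'n \<Rightarrow> real^'n \<Rightarrow> real^'n" where
  "flip k x = x - (2 * (x \<bullet> axis k 1)) *\<^sub>R axis k 1"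

lemma flip_nth: "flip k x $ j = (if j = k then - x $ j else x $ j)"
  unfolding flip_def inner_axis by (simp add: axis_def)

lemma flip_norm: "norm (flip k x) = norm x"
proof -
  have "(norm (flip k x))\<^sup>2 = (norm x)\<^sup>2"
    unfolding power2_norm_eq_inner flip_def
    by (simp add: inner_diff_left inner_diff_right inner_axis_axis inner_commute algebra_simps)
  then show ?thesis by (simp add: power2_eq_iff_nonneg)
qed

lemma flip_scale: "flip k (c *\<^sub>R x) = c *\<^sub>R flip k x"
  by (simp add: flip_def algebra_simps)

lemma flip_meas[measurable]: "flip k \<in> borel_measurable borel"
  unfolding flip_def by measurable

lemma lborel_flip: "distr lborel borel (flip k) = (lborel :: (real^'n) measure)"
proof -
  define c :: "real^'n \<Rightarrow> real" where "c b = (if b = axis k 1 then -1 else 1)" for b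
  have c0: "\<And>j. j \<in> Basis \<Longrightarrow> c j \<noteq> 0" by (simp add: c_def)
  have T: "(\<lambda>x. 0 + (\<Sum>j\<in>Basis. (c j * (x \<bullet> j)) *\<^sub>R j)) = flip k"
  proof (rule ext, rule euclidean_eqI)
    fix x :: "real^'n" and b :: "real^'n" assume b: "b \<in> Basis"
    then obtain i where bi: "b = axis i 1" using axis_inverse by blast
    have l: "(0 + (\<Sum>j\<in>Basis. (c j * (x \<bullet> j)) *\<^sub>R j)) \<bullet> b = c b * (x \<bullet> b)"
      using inner_sum_left_Basis[OF b, of "\<lambda>j. c j * (x \<bullet> j)"] by simp
    have r: "flip k x \<bullet> b = x \<bullet> b - 2 * (x \<bullet> axis k 1) * (axis k 1 \<bullet> b)"
      by (simp add: flip_def inner_diff_left)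
    show "(0 + (\<Sum>j\<in>Basis. (c j * (x \<bullet> j)) *\<^sub>R j)) \<bullet> b = flip k x \<bullet> b"
    proof (cases "i = k")
      case True
      then show ?thesis unfolding l r by (simp add: bi c_def inner_axis_axis)
    next
      case False
      then have "axis i (1::real) \<noteq> axis k 1" by (simp add: axis_eq_axis)
      then show ?thesis unfolding l r using False by (simp add: bi c_def inner_axis_axis)
    qed
  qed
  have "\<bar>c j\<bar> = 1" for j by (simp add: c_def)
  then have "(\<Prod>j\<in>Basis. \<bar>c j\<bar>) = 1" by simp
  then show ?thesis using lborel_affine_euclidean[where c=c and t=0, OF c0] unfolding T by (simp add: density_1)
qed

definition Uball :: "(real^'n) measure" where
  "Uball = uniform_measure lborel (ball 0 1)"

lemma Uball_prob: "prob_space (Uball :: (real^'n) measure)"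
  unfolding Uball_def
proof (rule prob_space_uniform_measure)
  show "emeasure lborel (ball (0::real^'n) 1) \<noteq> 0"
  proof
    assume "emeasure lborel (ball (0::real^'n) 1) = 0"
    then have "measure lborel (ball (0::real^'n) 1) = 0" by (simp add: measure_def)
    then show False using content_ball_pos[of 1 "0::real^'n"] by simp
  qed
  show "emeasure lborel (ball (0::real^'n) 1) \<noteq> \<infinity>"
    using emeasure_lborel_ball_finite[of "0::real^'n" 1] by simp
qed

lemma sets_Uball[simp]: "sets Uball = sets borel"
  by (simp add: Uball_def)

lemma space_Uball[simp]: "space Uball = UNIV"
  by (simp add: Uball_def)

lemma Uball_flip: "distr Uball borel (flip k) = (Uball :: (real^'n) measure)"
proof (rule measure_eqI)
  show "sets (distr Uball borel (flip k)) = sets Uball" by simp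
next
  fix X :: "(real^'n) set" assume "X \<in> sets (distr Uball borel (flip k))"
  then have X: "X \<in> sets borel" by simp
  have fm: "flip k \<in> Uball \<rightarrow>\<^sub>M borel"
    by (subst measurable_cong_sets[OF sets_Uball refl]) (rule flip_meas)
  have pre: "flip k -` X \<in> sets borel" using measurable_sets[OF flip_meas X] by simp
  have bb: "ball (0::real^'n) 1 \<in> sets lborel" by simp
  have eqset: "ball 0 1 \<inter> flip k -` X = flip k -` (ball 0 1 \<inter> X)"
    by (auto simp: flip_norm)
  have "emeasure lborel (flip k -` (ball 0 1 \<inter> X)) = emeasure (distr lborel borel (flip k)) (ball 0 1 \<inter> X)"
    using X by (subst emeasure_distr) auto
  also have "\<dots> = emeasure lborel (ball 0 1 \<inter> X)" by (simp add: lborel_flip)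
  finally have e1: "emeasure lborel (flip k -` (ball 0 1 \<inter> X)) = emeasure lborel (ball 0 1 \<inter> X)" .
  have "emeasure (distr Uball borel (flip k)) X = emeasure Uball (flip k -` X)"
    using X fm by (subst emeasure_distr) auto
  also have "\<dots> = emeasure lborel (ball 0 1 \<inter> flip k -` X) / emeasure lborel (ball (0::real^'n) 1)"
    unfolding Uball_def using pre by (subst emeasure_uniform_measure) auto
  also have "\<dots> = emeasure lborel (ball 0 1 \<inter> X) / emeasure lborel (ball (0::real^'n) 1)"
    unfolding eqset e1 ..
  also have "\<dots> = emeasure Uball X"
    unfolding Uball_def using X by (subst emeasure_uniform_measure) auto
  finally show "emeasure (distr Uball borel (flip k)) X = emeasure Uball X" .
qed

lemma integral_Uball_flip:
  fixes h :: "real^'n \<Rightarrow> real"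
  assumes [measurable]: "h \<in> borel_measurable borel"
  shows "integral\<^sup>L Uball h = integral\<^sup>L Uball (\<lambda>w. h (flip k w))"
proof -
  have "integral\<^sup>L Uball h = integral\<^sup>L (distr Uball borel (flip k)) h" by (simp add: Uball_flip)
  also have "\<dots> = integral\<^sup>L Uball (\<lambda>w. h (flip k w))"
    by (rule integral_distr) (subst measurable_cong_sets[OF sets_Uball refl], rule flip_meas, simp)
  finally show ?thesis .
qed



definition gr :: "real \<Rightarrow> real^'n \<Rightarrow> real^'n" where
  "gr r w = (r / norm w) *\<^sub>R w"

lemma gr_meas[measurable]: "gr r \<in> borel_measurable borel"
  unfolding gr_def by measurable

lemma gr_nth_meas[measurable]: "(\<lambda>w. gr r w $ i) \<in> borel_measurable borel"
  unfolding gr_def vector_scaleR_component by measurable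

lemma meas_Uball: "f \<in> borel_measurable borel \<Longrightarrow> f \<in> borel_measurable Uball"
  by (subst measurable_cong_sets[OF sets_Uball refl])

lemma int_Uball:
  fixes f :: "real^'n \<Rightarrow> real"
  assumes "f \<in> borel_measurable borel" and "\<And>w. \<bar>f w\<bar> \<le> B"
  shows "integrable Uball f"
  by (rule finite_measure.integrable_const_bound[OF prob_space.finite_measure[OF Uball_prob], where B=B])
     (use assms in \<open>auto intro: meas_Uball\<close>)

lemma gr_norm: "r > 0 \<Longrightarrow> norm (gr r w) = (if w = 0 then 0 else r)"
  by (simp add: gr_def)

lemma gr_norm_le: "r > 0 \<Longrightarrow> norm (gr r w) \<le> r"
  by (simp add: gr_norm)

lemma gr_comp_le: "r > 0 \<Longrightarrow> \<bar>gr r w $ i\<bar> \<le> r"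
  using component_le_norm_cart[of "gr r w" i] gr_norm_le[of r w] by linarith

lemma gr_flip: "gr r (flip k w) = flip k (gr r w)"
  by (simp add: gr_def flip_norm flip_scale)

lemma prod_bound:
  assumes "r > 0"
  shows "\<bar>gr r w $ i * gr r w $ j\<bar> \<le> r * r"
  using gr_comp_le[OF assms, of w i] gr_comp_le[OF assms, of w j]
  by (simp add: abs_mult mult_mono')

lemma int_prod: "r > 0 \<Longrightarrow> integrable Uball (\<lambda>w. c * (gr r w $ i * gr r w $ j))"
  by (rule integrable_mult_right, rule int_Uball[where B="r*r"]) (auto intro: prod_bound)

lemma cross_zero:
  assumes r: "r > 0" and ij: "i \<noteq> j"
  shows "integral\<^sup>L Uball (\<lambda>w. gr r w $ i * gr r w $ j) = 0"
proof -
  let ?h = "\<lambda>w. gr r w $ i * gr r w $ j"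
  have "integral\<^sup>L Uball ?h = integral\<^sup>L Uball (\<lambda>w. ?h (flip i w))"
    by (rule integral_Uball_flip) measurable
  also have "\<dots> = integral\<^sup>L Uball (\<lambda>w. - ?h w)"
    using ij by (simp add: gr_flip flip_nth)
  also have "\<dots> = - integral\<^sup>L Uball ?h" by simp
  finally show ?thesis by simp
qed

lemma second_moment:
  fixes e :: "real^'n"
  assumes r: "r > 0" and e2: "\<And>i. (e $ i)\<^sup>2 = 1"
  shows "integral\<^sup>L Uball (\<lambda>w. (gr r w \<bullet> e)\<^sup>2) = r\<^sup>2"
proof -
  have expand: "(gr r w \<bullet> e)\<^sup>2 = (\<Sum>i\<in>UNIV. \<Sum>j\<in>UNIV. (e $ i * e $ j) * (gr r w $ i * gr r w $ j))" for w
    unfolding inner_vec_def power2_eq_square sum_product by (simp add: algebra_simps)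
  have "integral\<^sup>L Uball (\<lambda>w. (gr r w \<bullet> e)\<^sup>2)
      = integral\<^sup>L Uball (\<lambda>w. \<Sum>i\<in>UNIV. \<Sum>j\<in>UNIV. (e $ i * e $ j) * (gr r w $ i * gr r w $ j))"
    unfolding expand ..
  also have "\<dots> = (\<Sum>i\<in>UNIV. \<Sum>j\<in>UNIV. integral\<^sup>L Uball (\<lambda>w. (e $ i * e $ j) * (gr r w $ i * gr r w $ j)))"
  proof -
    have ii: "\<And>i j. integrable Uball (\<lambda>w. (e $ i * e $ j) * (gr r w $ i * gr r w $ j))"
      using int_prod[OF r] .
    have "integral\<^sup>L Uball (\<lambda>w. \<Sum>i\<in>UNIV. \<Sum>j\<in>UNIV. (e $ i * e $ j) * (gr r w $ i * gr r w $ j))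
        = (\<Sum>i\<in>UNIV. integral\<^sup>L Uball (\<lambda>w. \<Sum>j\<in>UNIV. (e $ i * e $ j) * (gr r w $ i * gr r w $ j)))"
      by (rule Bochner_Integration.integral_sum) (auto intro!: Bochner_Integration.integrable_sum ii)
    also have "\<dots> = (\<Sum>i\<in>UNIV. \<Sum>j\<in>UNIV. integral\<^sup>L Uball (\<lambda>w. (e $ i * e $ j) * (gr r w $ i * gr r w $ j)))"
      by (intro sum.cong refl Bochner_Integration.integral_sum ii)
    finally show ?thesis .
  qed
  also have "\<dots> = (\<Sum>i\<in>UNIV. \<Sum>j\<in>UNIV. (e $ i * e $ j) * integral\<^sup>L Uball (\<lambda>w. gr r w $ i * gr r w $ j))"
    by simp
  also have "\<dots> = (\<Sum>i\<in>UNIV. integral\<^sup>L Uball (\<lambda>w::real^'n. gr r w $ i * gr r w $ i))"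
  proof -
    have "(\<Sum>j\<in>UNIV. (e $ i * e $ j) * integral\<^sup>L Uball (\<lambda>w. gr r w $ i * gr r w $ j))
        = integral\<^sup>L Uball (\<lambda>w. gr r w $ i * gr r w $ i)" for i
    proof -
      have "(\<Sum>j\<in>UNIV. (e $ i * e $ j) * integral\<^sup>L Uball (\<lambda>w. gr r w $ i * gr r w $ j))
          = (\<Sum>j\<in>UNIV. if j = i then integral\<^sup>L Uball (\<lambda>w. gr r w $ i * gr r w $ i) else 0)"
      proof (intro sum.cong refl)
        fix j
        show "(e $ i * e $ j) * integral\<^sup>L Uball (\<lambda>w. gr r w $ i * gr r w $ j)
          = (if j = i then integral\<^sup>L Uball (\<lambda>w. gr r w $ i * gr r w $ i) else 0)"
        proof (cases "j = i")
          case True then show ?thesis using e2[of i] by (simp add: power2_eq_square)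
        next
          case False then have "i \<noteq> j" by simp
          then show ?thesis using cross_zero[OF r \<open>i \<noteq> j\<close>] False by simp
        qed
      qed
      then show ?thesis by simp
    qed
    then show ?thesis by simp
  qed
  also have "\<dots> = integral\<^sup>L Uball (\<lambda>w::real^'n. \<Sum>i\<in>UNIV. gr r w $ i * gr r w $ i)"
    using int_prod[OF r, of 1] by (intro Bochner_Integration.integral_sum[symmetric]) auto
  also have "\<dots> = integral\<^sup>L Uball (\<lambda>w::real^'n. (norm (gr r w))\<^sup>2)"
    by (simp add: power2_norm_eq_inner inner_vec_def)
  also have "\<dots> = integral\<^sup>L (Uball :: (real^'n) measure) (\<lambda>w. r\<^sup>2)"
  proof (rule integral_cong_AE)
    show "(\<lambda>w::real^'n. (norm (gr r w))\<^sup>2) \<in> borel_measurable Uball" by (rule meas_Uball) measurable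
    show "(\<lambda>w::real^'n. r\<^sup>2) \<in> borel_measurable Uball" by simp
    have "AE w in lborel. w \<noteq> (0::real^'n)" by (rule AE_lborel_singleton)
    then have "AE w in Uball. w \<noteq> (0::real^'n)"
      unfolding Uball_def by (intro AE_uniform_measureI) (auto elim: AE_mp)
    then show "AE w in Uball. (norm (gr r (w::real^'n)))\<^sup>2 = r\<^sup>2"
      by (rule AE_mp) (auto simp: gr_norm[OF r])
  qed
  also have "\<dots> = r\<^sup>2"
  proof -
    have "measure (Uball::(real^'n) measure) (space Uball) = 1" by (rule prob_space.prob_space[OF Uball_prob])
    then show ?thesis by simp
  qed
  finally show ?thesis .
qed



lemma diag_mult: "diag_mat a ** diag_mat b = diag_mat (\<chi> i. a $ i * b $ i)"
proof -
  have "(\<Sum>k\<in>UNIV. (if i = k then a $ i else 0) * (if k = j then b $ k else 0))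
      = (if i = j then a $ i * b $ i else 0)" for i j
    by (simp add: if_distrib[of "\<lambda>t. t * _"] sum.delta cong: if_cong)
  then show ?thesis by (simp add: vec_eq_iff matrix_matrix_mult_def diag_mat_def)
qed

lemma diag_mulv: "diag_mat a *v v = (\<chi> i. a $ i * v $ i)"
proof -
  have "(\<Sum>j\<in>UNIV. (if i = j then a $ i else 0) * v $ j) = a $ i * v $ i" for i
    by (simp add: if_distrib[of "\<lambda>t. t * _"] sum.delta cong: if_cong)
  then show ?thesis by (simp add: vec_eq_iff matrix_vector_mult_def diag_mat_def)
qed

lemma diag_one: "diag_mat (\<chi> i. 1) = mat 1"
  by (simp add: vec_eq_iff diag_mat_def mat_def)

lemma Cmat_e:
  fixes A :: "real^'n^'n" and x :: "real^'n"
  assumes eig: "A *v x = l *\<^sub>R x" and nz: "\<forall>i. x $ i \<noteq> 0"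
  shows "Cmat A l x *v (\<chi> i. sgn (x $ i)) = 0"
proof -
  define D where "D = diag_mat (\<chi> i. \<bar>x $ i\<bar>)"
  define Di where "Di = diag_mat (\<chi> i. 1 / \<bar>x $ i\<bar>)"
  have "D ** Di = mat 1 \<and> Di ** D = mat 1"
    using nz by (simp add: D_def Di_def diag_mult diag_one[symmetric])
  then have ex: "\<exists>A'. D ** A' = mat 1 \<and> A' ** D = mat 1" by blast
  have inv: "matrix_inv D ** D = mat 1"
    unfolding matrix_inv_def using someI_ex[OF ex] by blast
  define e :: "real^'n" where "e = (\<chi> i. sgn (x $ i))"
  have as: "\<And>t::real. \<bar>t\<bar> * sgn t = t" by (simp add: sgn_if)
  have De: "D *v e = x" by (simp add: D_def e_def diag_mulv vec_eq_iff as)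
  have "Cmat A l x *v e = matrix_inv D *v (A *v (D *v e)) - l *\<^sub>R e"
    unfolding Cmat_def D_def[symmetric]
    by (simp add: matrix_vector_mult_diff_rdistrib matrix_vector_mul_assoc matrix_mul_assoc
        flip: scaleR_matrix_vector_assoc)
  also have "\<dots> = l *\<^sub>R (matrix_inv D *v (D *v e)) - l *\<^sub>R e"
    by (simp add: De eig matrix_vector_mult_scaleR)
  also have "\<dots> = 0" by (simp add: matrix_vector_mul_assoc inv)
  finally show ?thesis by (simp add: e_def)
qed

theorem mainTheorem1:
  fixes A :: "real^'n^'n" and l :: real and x y0 :: "real^'n"
  assumes n2: "CARD('n) \<ge> 2"
    and simple: "simple_eigenvalue A l"
    and eigvec: "A *v x = l *\<^sub>R x"
    and nonzero: "\<forall>i. x $ i \<noteq> 0"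
    and sigma: "singular_value (Cmat A l x) (CARD('n) - 1) > 0"
    and y0: "y0 \<noteq> 0"
  shows "(\<forall>k::nat.
           measure_pmf.expectation (iterate_pmf (Cmat A l x) y0 k)
             (\<lambda>y. real (min (card (wrong_signs (\<chi> i. sgn (x $ i)) y))
                             (CARD('n) - card (wrong_signs (\<chi> i. sgn (x $ i)) y))) * (norm y)\<^sup>2)
           \<le> real CARD('n)
             * (1 - (singular_value (Cmat A l x) (CARD('n) - 1))\<^sup>2 / (frobenius_norm (Cmat A l x))\<^sup>2) ^ k
             * (norm y0)\<^sup>2)
         \<and> (\<forall>r>0. \<forall>k::nat.
           (\<integral>z. measure_pmf.expectation (iterate_pmf (Cmat A l x) z k) (\<lambda>y. (norm y)\<^sup>2)
              \<partial>(uniform_sphere r :: (real^'n) measure))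
           \<ge> r\<^sup>2 / real CARD('n))"
proof -
  define C where "C = Cmat A l x"
  define e :: "real^'n" where "e = (\<chi> i. sgn (x $ i))"
  define \<sigma> where "\<sigma> = singular_value C (CARD('n) - 1)"
  have Ce: "C *v e = 0" using Cmat_e[OF eigvec nonzero] by (simp add: C_def e_def)
  have rows: "\<And>i. C $ i \<bullet> e = 0" using Ce row_dot[of C e] by (simp add: vec_eq_iff)
  have pm: "\<And>i. e $ i = 1 \<or> e $ i = -1" using nonzero by (auto simp: e_def sgn_if)
  have e2: "\<And>i. (e $ i)\<^sup>2 = 1" using pm by (metis power2_minus one_power2)
  have ee: "e \<bullet> e = real CARD('n)" by (simp add: inner_vec_def e2[unfolded power2_eq_square])
  have e0: "e \<noteq> 0"
  proof
    assume "e = 0" then show False using ee by simp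
  qed
  have sp: "\<sigma> > 0" using sigma by (simp add: \<sigma>_def C_def)
  have sb: "\<And>z. z \<bullet> e = 0 \<Longrightarrow> \<sigma>\<^sup>2 * (norm z)\<^sup>2 \<le> (norm (C *v z))\<^sup>2"
    unfolding \<sigma>_def by (rule sv_bound[OF n2 Ce e0 sp[unfolded \<sigma>_def]])
  have fro: "(frobenius_norm C)\<^sup>2 = F2 C"
    by (simp add: frobenius_norm_def F2_def norm_sq_sum sum_nonneg)
  have "\<not> (\<forall>i j::'n. i = j)"
  proof
    assume h: "\<forall>i j::'n. i = j"
    then have "(UNIV::'n set) \<subseteq> {undefined}" by auto
    then have "CARD('n) \<le> card {undefined::'n}" by (intro card_mono) auto
    then show False using n2 by simp
  qed
  then obtain i0 j0 :: 'n where ij: "i0 \<noteq> j0" by blast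
  define z0 where "z0 = (e $ j0) *\<^sub>R axis i0 (1::real) - (e $ i0) *\<^sub>R axis j0 1"
  have z0e: "z0 \<bullet> e = 0" by (simp add: z0_def inner_diff_left inner_axis')
  have "z0 $ i0 = e $ j0" using ij by (simp add: z0_def axis_def)
  then have "z0 \<noteq> 0" using pm[of j0] by auto
  then have nz0: "(norm z0)\<^sup>2 > 0" by simp
  have CF: "(norm (C *v z0))\<^sup>2 \<le> F2 C * (norm z0)\<^sup>2"
  proof -
    have "(norm (C *v z0))\<^sup>2 = (\<Sum>j\<in>UNIV. (C $ j \<bullet> z0)\<^sup>2)" by (simp add: norm_sq_sum row_dot)
    also have "\<dots> \<le> (\<Sum>j\<in>UNIV. (norm (C $ j))\<^sup>2 * (norm z0)\<^sup>2)"
    proof (rule sum_mono)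
      fix j
      have "\<bar>C $ j \<bullet> z0\<bar> \<le> norm (C $ j) * norm z0" by (rule Cauchy_Schwarz_ineq2)
      then have "\<bar>C $ j \<bullet> z0\<bar>\<^sup>2 \<le> (norm (C $ j) * norm z0)\<^sup>2" by (intro power_mono) auto
      then show "(C $ j \<bullet> z0)\<^sup>2 \<le> (norm (C $ j))\<^sup>2 * (norm z0)\<^sup>2" by (simp add: power_mult_distrib)
    qed
    also have "\<dots> = F2 C * (norm z0)\<^sup>2" by (simp add: F2_def sum_distrib_right)
    finally show ?thesis .
  qed
  have "\<sigma>\<^sup>2 * (norm z0)\<^sup>2 \<le> F2 C * (norm z0)\<^sup>2" using sb[OF z0e] CF by linarith
  then have sF: "\<sigma>\<^sup>2 \<le> F2 C" using nz0 by simp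
  have Fpos: "F2 C > 0" using sF sp by (smt (verit) zero_less_power)
  have q0: "0 \<le> 1 - \<sigma>\<^sup>2 / F2 C" using sF Fpos by simp
  have P1: "\<forall>k::nat. measure_pmf.expectation (iterate_pmf C y0 k)
             (\<lambda>y. real (min (card (wrong_signs e y)) (CARD('n) - card (wrong_signs e y))) * (norm y)\<^sup>2)
           \<le> real CARD('n) * (1 - \<sigma>\<^sup>2 / (frobenius_norm C)\<^sup>2) ^ k * (norm y0)\<^sup>2"
  proof
    fix k :: nat
    have "measure_pmf.expectation (iterate_pmf C y0 k)
             (\<lambda>y. real (min (card (wrong_signs e y)) (CARD('n) - card (wrong_signs e y))) * (norm y)\<^sup>2)
        \<le> measure_pmf.expectation (iterate_pmf C y0 k) (\<lambda>y. real CARD('n) * (norm (Pj e y))\<^sup>2)"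
      by (intro integral_mono integrable_measure_pmf_finite finite_iterate sign_bound[OF pm])
    also have "\<dots> = real CARD('n) * measure_pmf.expectation (iterate_pmf C y0 k) (\<lambda>y. (norm (Pj e y))\<^sup>2)"
      by simp
    also have "\<dots> \<le> real CARD('n) * ((1 - \<sigma>\<^sup>2 / F2 C) ^ k * (norm (Pj e y0))\<^sup>2)"
      by (intro mult_left_mono contraction[OF Fpos e0 rows sb q0]) auto
    also have "\<dots> \<le> real CARD('n) * ((1 - \<sigma>\<^sup>2 / F2 C) ^ k * (norm y0)\<^sup>2)"
    proof -
      have "(norm (Pj e y0))\<^sup>2 \<le> (norm y0)\<^sup>2"
        using Pj_norm[OF e0, of y0] ee by (simp add: divide_nonneg_pos)
      then show ?thesis using q0 by (intro mult_left_mono) auto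
    qed
    finally show "measure_pmf.expectation (iterate_pmf C y0 k)
             (\<lambda>y. real (min (card (wrong_signs e y)) (CARD('n) - card (wrong_signs e y))) * (norm y)\<^sup>2)
           \<le> real CARD('n) * (1 - \<sigma>\<^sup>2 / (frobenius_norm C)\<^sup>2) ^ k * (norm y0)\<^sup>2"
      by (simp add: fro mult.assoc)
  qed
  have P2: "\<forall>r>0. \<forall>k::nat.
           (\<integral>z. measure_pmf.expectation (iterate_pmf C z k) (\<lambda>y. (norm y)\<^sup>2)
              \<partial>(uniform_sphere r :: (real^'n) measure))
           \<ge> r\<^sup>2 / real CARD('n)"
  proof (intro allI impI)
    fix r :: real and k :: nat
    assume r: "r > 0"
    define f where "f z = measure_pmf.expectation (iterate_pmf C z k) (\<lambda>y. (norm y)\<^sup>2)" for z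
    have "continuous_on UNIV f" unfolding f_def
      by (rule exp_cont[OF Fpos]) (auto intro: continuous_intros)
    then have fm[measurable]: "f \<in> borel_measurable borel" by (rule borel_measurable_continuous_onI)
    have S: "uniform_sphere r = distr Uball borel (gr r)"
      by (simp add: uniform_sphere_def Uball_def gr_def[abs_def])
    have grm: "gr r \<in> Uball \<rightarrow>\<^sub>M borel" by (rule meas_Uball) (rule gr_meas)
    have intS: "integral\<^sup>L (uniform_sphere r) f = integral\<^sup>L Uball (\<lambda>w. f (gr r w))"
      unfolding S by (rule integral_distr[OF grm fm])
    define L where "L w = (gr r w \<bullet> e)\<^sup>2 / real CARD('n)" for w
    have Lf: "L w \<le> f (gr r w)" for w
      unfolding L_def f_def ee[symmetric] by (rule exp_lower[OF rows e0])
    have fup: "f (gr r w) \<le> r\<^sup>2" for w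
    proof -
      have "f (gr r w) \<le> (norm (gr r w))\<^sup>2" unfolding f_def by (rule exp_upper)
      also have "\<dots> \<le> r\<^sup>2" using gr_norm_le[OF r, of w] by (intro power_mono) auto
      finally show ?thesis .
    qed
    have L0: "0 \<le> L w" for w by (simp add: L_def)
    have f0: "0 \<le> f z" for z unfolding f_def by (rule integral_nonneg_AE) auto
    have Lm: "(\<lambda>w. L w) \<in> borel_measurable borel" unfolding L_def by measurable
    have int1: "integrable Uball (\<lambda>w. f (gr r w))"
      by (rule int_Uball[where B="r\<^sup>2"]) (use fup f0 in \<open>auto simp: abs_le_iff\<close>)
    have int2: "integrable Uball L"
      by (rule int_Uball[where B="r\<^sup>2", OF Lm]) (use fup Lf L0 in \<open>auto simp: abs_le_iff intro: order_trans\<close>)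
    have "r\<^sup>2 / real CARD('n) = integral\<^sup>L Uball L"
      unfolding L_def by (simp add: integral_divide_zero second_moment[OF r e2])
    also have "\<dots> \<le> integral\<^sup>L Uball (\<lambda>w. f (gr r w))"
      by (rule integral_mono[OF int2 int1 Lf])
    also have "\<dots> = integral\<^sup>L (uniform_sphere r) f" by (rule intS[symmetric])
    finally show "(\<integral>z. measure_pmf.expectation (iterate_pmf C z k) (\<lambda>y. (norm y)\<^sup>2)
              \<partial>(uniform_sphere r :: (real^'n) measure)) \<ge> r\<^sup>2 / real CARD('n)"
      by (simp add: f_def[abs_def])
  qed
  show ?thesis using P1 P2 unfolding C_def e_def \<sigma>_def by blast
qed


end
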